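(* $z_2(5,3)=9$.
   Context: Double Zarankiewicz number: consider configurations $G=([m],[n],E_1\cup E_2)$ where $[m]=\{1,\dots,m\}$, $E_1\subseteq[m]\times[n]$ is a set of 1-edges (cells) and $E_2$ is a set of 2-edges $(i,j;k,l)$ with $i,k\in[m]$, $j,l\in[n]$, $i\ne k$, $j\ne l$; the cells $(i,j)$ and $(k,l)$ are the two halves of this 2-edge. Simplicity condition: the halves of all 2-edges are pairwise distinct cells and none of them belongs to $E_1$. A cell is occupied if it lies in $E_1$ or is a half of some 2-edge. $G$ contains a generalized $C_4$-cycle if (1) there are four 1-edges $(i,j),(i,l),(k,j),(k,l)\in E_1$ with $i\ne k$, $j\ne l$; or (2) there is a 2-edge $(i,j;k,l)\in E_2$ whose two opposite cells $(i,l)$ and $(k,j)$ are both occupied; or (3) there are a 2-edge $(i,j;p,q)\in E_2$ and a cell $(k,l)$ such that the five cells $(k,l),(k,j),(k,q),(i,l),(p,l)$ are pairwise distinct and all occupied. $z_2(m,n)$ is the maximum of $|E_1|+|E_2|$ over all such $G$ satisfying the simplicity condition and containing no generalized $C_4$-cycle. *)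

theory Defs
  imports Main
begin

type_synonym cell = "nat \<times> nat"
type_synonym edge2 = "cell \<times> cell"   (* ((i,j),(k,l)) is the 2-edge (i,j;k,l) *)

definition valid_cell :: "nat \<Rightarrow> nat \<Rightarrow> cell \<Rightarrow> bool" where
  "valid_cell m n c \<longleftrightarrow> fst c \<in> {1..m} \<and> snd c \<in> {1..n}"

definition valid_edge2 :: "nat \<Rightarrow> nat \<Rightarrow> edge2 \<Rightarrow> bool" where
  "valid_edge2 m n e \<longleftrightarrow> (case e of ((i,j),(k,l)) \<Rightarrow>
     valid_cell m n (i,j) \<and> valid_cell m n (k,l) \<and> i \<noteq> k \<and> j \<noteq> l)"

definition halves :: "edge2 \<Rightarrow> cell set" where
  "halves e = {fst e, snd e}"

definition simple_config :: "cell set \<Rightarrow> edge2 set \<Rightarrow> bool" where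
  "simple_config E1 E2 \<longleftrightarrow>
     (\<forall>e\<in>E2. \<forall>e'\<in>E2. e \<noteq> e' \<longrightarrow> halves e \<inter> halves e' = {}) \<and>
     (\<forall>e\<in>E2. halves e \<inter> E1 = {})"

definition occupied :: "cell set \<Rightarrow> edge2 set \<Rightarrow> cell \<Rightarrow> bool" where
  "occupied E1 E2 c \<longleftrightarrow> c \<in> E1 \<or> (\<exists>e\<in>E2. c \<in> halves e)"

definition has_gen_C4 :: "cell set \<Rightarrow> edge2 set \<Rightarrow> bool" where
  "has_gen_C4 E1 E2 \<longleftrightarrow>
     (\<exists>i j k l. i \<noteq> k \<and> j \<noteq> l \<and> (i,j) \<in> E1 \<and> (i,l) \<in> E1 \<and> (k,j) \<in> E1 \<and> (k,l) \<in> E1) \<or>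
     (\<exists>i j k l. ((i,j),(k,l)) \<in> E2 \<and> occupied E1 E2 (i,l) \<and> occupied E1 E2 (k,j)) \<or>
     (\<exists>i j p q k l. ((i,j),(p,q)) \<in> E2 \<and>
        distinct [(k,l),(k,j),(k,q),(i,l),(p,l)] \<and>
        (\<forall>c\<in>{(k,l),(k,j),(k,q),(i,l),(p,l)}. occupied E1 E2 c))"

definition z2_config :: "nat \<Rightarrow> nat \<Rightarrow> cell set \<Rightarrow> edge2 set \<Rightarrow> bool" where
  "z2_config m n E1 E2 \<longleftrightarrow>
     (\<forall>c\<in>E1. valid_cell m n c) \<and> (\<forall>e\<in>E2. valid_edge2 m n e) \<and>
     simple_config E1 E2 \<and> \<not> has_gen_C4 E1 E2"

definition z2 :: "nat \<Rightarrow> nat \<Rightarrow> nat" where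
  "z2 m n = Max {card E1 + card E2 | E1 E2. z2_config m n E1 E2}"

end

theory Submission imports Defs begin

lemma sub3_cases:
  assumes "A \<subseteq> {1..3::nat}"
  shows "A = {} \<or> A = {1} \<or> A = {2} \<or> A = {3} \<or> A = {1,2} \<or> A = {1,3} \<or> A = {2,3} \<or> A = {1,2,3}"
proof -
  have x3: "x = 1 \<or> x = 2 \<or> x = 3" if "x \<in> A" for x
  proof -
    have "1 \<le> x" "x \<le> 3" using assms that by auto
    then show ?thesis by linarith
  qed
  have A_eq: "A = {x. x = 1 \<and> 1 \<in> A} \<union> {x. x = 2 \<and> 2 \<in> A} \<union> {x. x = 3 \<and> 3 \<in> A}"
    apply (rule set_eqI) 
    apply (rule iffI)
    apply (frule x3) apply (elim disjE) apply simp_all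
    apply (elim disjE) apply simp_all
    done
  obtain b1 b2 b3 where "b1 = (1 \<in> A)" "b2 = (2 \<in> A)" "b3 = (3 \<in> A)" by blast
  then have A2: "A = {x. x = 1 \<and> b1} \<union> {x. x = 2 \<and> b2} \<union> {x. x = 3 \<and> b3}"
    using A_eq by simp
  show ?thesis
    unfolding A2
    by (cases b1; cases b2; cases b3) auto
qed

lemma row_lemma:
  assumes "A \<subseteq> {1..3::nat}"
  shows "card A \<le> card {(j,l). j \<in> A \<and> l \<in> A \<and> j < l} + 1 \<and>
         2 * card A \<le> card {(j,l). j \<in> A \<and> l \<in> A \<and> j < l} + 3"
proof -
  have "{(j,l). j \<in> {1::nat,2} \<and> l \<in> {1,2} \<and> j < l} = {(1,2)}" by auto
  moreover have "{(j,l). j \<in> {1::nat,3} \<and> l \<in> {1,3} \<and> j < l} = {(1,3)}" by auto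
  moreover have "{(j,l). j \<in> {2::nat,3} \<and> l \<in> {2,3} \<and> j < l} = {(2,3)}" by auto
  moreover have "{(j,l). j \<in> {1::nat,2,3} \<and> l \<in> {1,2,3} \<and> j < l} = {(1,2),(1,3),(2,3)}" by auto
  moreover have "{(j,l). j \<in> {a::nat} \<and> l \<in> {a} \<and> j < l} = {}" for a by auto
  moreover have "{(j,l). j \<in> ({}::nat set) \<and> l \<in> {} \<and> j < l} = {}" by auto
  ultimately show ?thesis
    using sub3_cases[OF assms] apply - apply (elim disjE) by simp_all
qed
lemma rect_lemma:
  assumes fin: "finite R" and sub: "E \<subseteq> R \<times> {1..3::nat}"
    and rf: "\<And>i j k l. i \<noteq> k \<Longrightarrow> j \<noteq> l \<Longrightarrow> (i,j) \<in> E \<Longrightarrow> (i,l) \<in> E \<Longrightarrow> (k,j) \<in> E \<Longrightarrow> (k,l) \<in> E \<Longrightarrow> False"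
  shows "card E \<le> card R + 3 \<and> 2 * card E \<le> 3 * card R + 3"
proof -
  define A where "A k = {j. (k,j) \<in> E}" for k
  define S where "S k = {(j,l). j \<in> A k \<and> l \<in> A k \<and> j < l}" for k
  have AS: "A k \<subseteq> {1..3}" if "k \<in> R" for k using sub unfolding A_def by auto
  have finA: "finite (A k)" for k
    by (rule finite_subset[of _ "{1..3}"]) (use sub in \<open>auto simp: A_def\<close>)
  have finS: "finite (S k)" for k
    by (rule finite_subset[of _ "A k \<times> A k"]) (auto simp: S_def finA)
  have E_eq: "E = Sigma R A" using sub unfolding A_def by auto
  have cardE: "card E = (\<Sum>k\<in>R. card (A k))"
    unfolding E_eq using fin finA by (simp add: card_SigmaI)
  define P where "P = Sigma R S"
  have cardP: "card P = (\<Sum>k\<in>R. card (S k))"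
    unfolding P_def using fin finS by (simp add: card_SigmaI)
  have inj: "inj_on snd P"
  proof (rule inj_onI)
    fix x y assume "x \<in> P" "y \<in> P" "snd x = snd y"
    then show "x = y"
      unfolding P_def S_def A_def
      apply (cases x; cases y)
      apply clarsimp
      apply (rule ccontr)
      apply (erule rf[rotated 2]) apply assumption+ apply simp
      done
  qed
  have img: "snd ` P \<subseteq> {(1,2),(1,3),(2,3)}"
  proof
    fix z assume "z \<in> snd ` P"
    then obtain k j l where "k \<in> R" "(j,l) \<in> S k" "z = (j,l)" unfolding P_def by auto
    then have "j \<in> A k" "l \<in> A k" "j < l" unfolding S_def by auto
    then have "j \<in> {1..3}" "l \<in> {1..3}" "j < l" using AS[OF \<open>k \<in> R\<close>] by auto
    then have "j = 1 \<and> l = 2 \<or> j = 1 \<and> l = 3 \<or> j = 2 \<and> l = 3" by auto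
    then show "z \<in> {(1,2),(1,3),(2,3)}" using \<open>z = (j,l)\<close> by auto
  qed
  have "card P = card (snd ` P)" using inj by (simp add: card_image)
  also have "\<dots> \<le> 3" using card_mono[OF _ img] by (simp add: card_insert_if)
  finally have P3: "card P \<le> 3" .
  have r1: "card (A k) \<le> card (S k) + 1" "2 * card (A k) \<le> card (S k) + 3" if "k \<in> R" for k
    using row_lemma[OF AS[OF that]] unfolding S_def by auto
  have "card E \<le> (\<Sum>k\<in>R. card (S k) + 1)" unfolding cardE by (rule sum_mono) (rule r1)
  also have "\<dots> = card P + card R" by (subst sum.distrib) (simp add: cardP)
  finally have c1: "card E \<le> card R + 3" using P3 by linarith
  have "2 * card E = (\<Sum>k\<in>R. 2 * card (A k))" unfolding cardE by (simp add: sum_distrib_left)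
  also have "\<dots> \<le> (\<Sum>k\<in>R. card (S k) + 3)" by (rule sum_mono) (rule r1)
  also have "\<dots> = card P + 3 * card R" by (subst sum.distrib) (simp add: cardP)
  finally have c2: "2 * card E \<le> 3 * card R + 3" using P3 by linarith
  show ?thesis using c1 c2 by simp
qed

definition Cells :: "cell set" where "Cells = {1..5::nat} \<times> {1..3::nat}"
definition HH :: "edge2 set \<Rightarrow> cell set" where "HH E2 = \<Union> (halves ` E2)"
definition Em :: "cell set \<Rightarrow> edge2 set \<Rightarrow> cell set" where "Em E1 E2 = Cells - E1 - HH E2"

context
  fixes E1 :: "cell set" and E2 :: "edge2 set"
  assumes cfg: "z2_config 5 3 E1 E2"
begin

lemma e1_sub: "E1 \<subseteq> Cells"
  using cfg unfolding z2_config_def valid_cell_def Cells_def by auto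

lemma e2_valid:
  assumes "((i,j),(p,q)) \<in> E2"
  shows "i \<in> {1..5} \<and> p \<in> {1..5} \<and> j \<in> {1..3} \<and> q \<in> {1..3} \<and> i \<noteq> p \<and> j \<noteq> q"
  using cfg assms unfolding z2_config_def valid_edge2_def valid_cell_def by fastforce

lemma HH_sub: "HH E2 \<subseteq> Cells"
proof
  fix c assume "c \<in> HH E2"
  then obtain i j p q where g: "((i,j),(p,q)) \<in> E2" "c \<in> halves ((i,j),(p,q))"
    unfolding HH_def by auto
  then show "c \<in> Cells" using e2_valid[OF g(1)] unfolding halves_def Cells_def by auto
qed

lemma disj_E1_HH: "E1 \<inter> HH E2 = {}"
  using cfg unfolding z2_config_def simple_config_def HH_def by auto

lemma halves_disj: "g \<in> E2 \<Longrightarrow> g' \<in> E2 \<Longrightarrow> g \<noteq> g' \<Longrightarrow> halves g \<inter> halves g' = {}"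
  using cfg unfolding z2_config_def simple_config_def by auto

lemma occ_iff: "occupied E1 E2 c \<longleftrightarrow> c \<in> E1 \<or> c \<in> HH E2"
  unfolding occupied_def HH_def by auto

lemma not_c4: "\<not> has_gen_C4 E1 E2"
  using cfg unfolding z2_config_def by auto

lemma finE2: "finite E2"
proof -
  have "E2 \<subseteq> Cells \<times> Cells"
  proof
    fix g assume "g \<in> E2"
    then obtain i j p q where "g = ((i,j),(p,q))" by (cases g) auto
    then show "g \<in> Cells \<times> Cells" using e2_valid \<open>g \<in> E2\<close> unfolding Cells_def by auto
  qed
  moreover have "finite (Cells \<times> Cells)" unfolding Cells_def by auto
  ultimately show ?thesis by (rule finite_subset)
qed

lemma card_HH: "card (HH E2) = 2 * card E2"
proof -
  have "card (HH E2) = (\<Sum>g\<in>E2. card (halves g))"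
    unfolding HH_def
    by (rule card_UN_disjoint) (auto simp: finE2 halves_def dest: halves_disj)
  also have "\<dots> = (\<Sum>g\<in>E2. 2)"
  proof (rule sum.cong)
    fix g assume "g \<in> E2"
    then obtain i j p q where gg: "g = ((i,j),(p,q))" by (cases g) auto
    then have "i \<noteq> p" using e2_valid \<open>g \<in> E2\<close> by auto
    then show "card (halves g) = 2" unfolding gg halves_def by auto
  qed simp
  finally show ?thesis by simp
qed

lemma count: "card E1 + 2 * card E2 + card (Em E1 E2) = 15"
proof -
  have fC: "finite Cells" unfolding Cells_def by auto
  have fE1: "finite E1" using e1_sub fC finite_subset by blast
  have fH: "finite (HH E2)" using HH_sub fC finite_subset by blast
  have fEm: "finite (Em E1 E2)" unfolding Em_def using fC by auto
  have eq: "Cells = (E1 \<union> HH E2) \<union> Em E1 E2" using e1_sub HH_sub unfolding Em_def by auto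
  have "card (E1 \<union> HH E2) = card E1 + card (HH E2)"
    by (rule card_Un_disjoint[OF fE1 fH disj_E1_HH])
  moreover have "card ((E1 \<union> HH E2) \<union> Em E1 E2) = card (E1 \<union> HH E2) + card (Em E1 E2)"
    by (rule card_Un_disjoint) (use fE1 fH fEm in \<open>auto simp: Em_def\<close>)
  moreover have "card Cells = 15" unfolding Cells_def by simp
  ultimately show ?thesis using eq card_HH by simp
qed

lemma em_iff: "c \<in> Em E1 E2 \<longleftrightarrow> c \<in> Cells \<and> \<not> occupied E1 E2 c"
  unfolding Em_def occ_iff by auto

lemma finEm: "finite (Em E1 E2)"
  unfolding Em_def Cells_def by auto

lemma Em_sub: "Em E1 E2 \<subseteq> Cells"
  unfolding Em_def by auto

lemma cond2:
  assumes g: "((i,j),(p,q)) \<in> E2"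
  shows "(i,q) \<in> Em E1 E2 \<or> (p,j) \<in> Em E1 E2"
proof -
  have v: "i \<in> {1..5} \<and> p \<in> {1..5} \<and> j \<in> {1..3} \<and> q \<in> {1..3} \<and> i \<noteq> p \<and> j \<noteq> q"
    using e2_valid[OF g] .
  have "\<not> (occupied E1 E2 (i,q) \<and> occupied E1 E2 (p,j))"
    using not_c4 g unfolding has_gen_C4_def by blast
  then show ?thesis using v unfolding em_iff Cells_def by auto
qed

lemma cond3:
  assumes g: "((i,j),(p,q)) \<in> E2"
    and k: "k \<in> {1..5}" "k \<noteq> i" "k \<noteq> p"
    and l: "l \<noteq> j" "l \<noteq> q" "l \<in> {1..3}"
    and full: "\<And>l'. l' \<in> {1..3} \<Longrightarrow> (k,l') \<notin> Em E1 E2"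
  shows "(i,l) \<in> Em E1 E2 \<or> (p,l) \<in> Em E1 E2"
proof (rule ccontr)
  assume na: "\<not> ((i,l) \<in> Em E1 E2 \<or> (p,l) \<in> Em E1 E2)"
  have v: "i \<in> {1..5} \<and> p \<in> {1..5} \<and> j \<in> {1..3} \<and> q \<in> {1..3} \<and> i \<noteq> p \<and> j \<noteq> q"
    using e2_valid[OF g] .
  have o1: "occupied E1 E2 (k,l)" using full[OF l(3)] k l unfolding em_iff Cells_def by auto
  have o2: "occupied E1 E2 (k,j)" using full[of j] k v unfolding em_iff Cells_def by auto
  have o3: "occupied E1 E2 (k,q)" using full[of q] k v unfolding em_iff Cells_def by auto
  have o4: "occupied E1 E2 (i,l)" using na v l unfolding em_iff Cells_def by auto
  have o5: "occupied E1 E2 (p,l)" using na v l unfolding em_iff Cells_def by auto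
  have d: "distinct [(k,l),(k,j),(k,q),(i,l),(p,l)]" using k l v by auto
  have "has_gen_C4 E1 E2"
    unfolding has_gen_C4_def
    apply (rule disjI2, rule disjI2)
    apply (rule exI[of _ i], rule exI[of _ j], rule exI[of _ p], rule exI[of _ q], rule exI[of _ k], rule exI[of _ l])
    using g d o1 o2 o3 o4 o5 by simp
  then show False using not_c4 by simp
qed

lemma rf_E1: "\<And>i j k l. i \<noteq> k \<Longrightarrow> j \<noteq> l \<Longrightarrow> (i,j) \<in> E1 \<Longrightarrow> (i,l) \<in> E1 \<Longrightarrow> (k,j) \<in> E1 \<Longrightarrow> (k,l) \<in> E1 \<Longrightarrow> False"
  using not_c4 unfolding has_gen_C4_def by blast

lemma t8: "card E1 \<le> 8"
proof -
  have "E1 \<subseteq> {1..5} \<times> {1..3}" using e1_sub unfolding Cells_def .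
  from rect_lemma[OF _ this rf_E1] show ?thesis by simp
qed

lemma lemmaA:
  assumes g: "((i,j),(p,q)) \<in> E2" and c3: "card (Em E1 E2) \<le> 3"
  shows "2 \<le> card (Em E1 E2 \<inter> ({i,p} \<times> UNIV))"
proof -
  have v: "i \<in> {1..5} \<and> p \<in> {1..5} \<and> j \<in> {1..3} \<and> q \<in> {1..3} \<and> i \<noteq> p \<and> j \<noteq> q"
    using e2_valid[OF g] .
  obtain c2 where c2: "c2 \<in> Em E1 E2" "c2 = (i,q) \<or> c2 = (p,j)" using cond2[OF g] by blast
  have ex_full: "\<exists>k\<in>{1..5}. k \<noteq> i \<and> k \<noteq> p \<and> (\<forall>l'\<in>{1..3}. (k,l') \<notin> Em E1 E2)"
  proof (rule ccontr)
    assume nf: "\<not> ?thesis"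
    have "insert (fst c2) ({1..5} - {i,p}) \<subseteq> fst ` Em E1 E2"
    proof
      fix k assume "k \<in> insert (fst c2) ({1..5} - {i,p})"
      then show "k \<in> fst ` Em E1 E2"
      proof
        assume "k = fst c2" then show ?thesis using c2 by auto
      next
        assume "k \<in> {1..5} - {i,p}"
        then obtain l' where "l' \<in> {1..3}" "(k,l') \<in> Em E1 E2" using nf by auto
        then show ?thesis by force
      qed
    qed
    then have "card (insert (fst c2) ({1..5} - {i,p})) \<le> card (fst ` Em E1 E2)"
      by (rule card_mono[rotated]) (simp add: finEm)
    also have "\<dots> \<le> card (Em E1 E2)" by (rule card_image_le[OF finEm])
    also have "\<dots> \<le> 3" by (rule c3)
    finally have le3: "card (insert (fst c2) ({1..5} - {i,p})) \<le> 3" .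
    have "fst c2 \<notin> {1..5} - {i,p}" using c2 by auto
    then have "card (insert (fst c2) ({1..5} - {i,p})) = Suc (card ({1..5::nat} - {i,p}))" by simp
    moreover have "card ({1..5::nat} - {i,p}) = 3"
      using v by (subst card_Diff_subset) auto
    ultimately show False using le3 by simp
  qed
  then obtain k where k: "k \<in> {1..5}" "k \<noteq> i" "k \<noteq> p" "\<forall>l'\<in>{1..3}. (k,l') \<notin> Em E1 E2" by blast
  have "\<exists>l. l \<in> {1..3::nat} \<and> l \<noteq> j \<and> l \<noteq> q"
  proof -
    have "j \<in> {1..3}" "q \<in> {1..3}" using v by auto
    then show ?thesis
      by (intro exI[of _ "if j \<noteq> 1 \<and> q \<noteq> 1 then 1 else if j \<noteq> 2 \<and> q \<noteq> 2 then 2 else 3"]) auto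
  qed
  then obtain l where l: "l \<in> {1..3::nat}" "l \<noteq> j" "l \<noteq> q" by blast
  obtain c3 where c3': "c3 \<in> Em E1 E2" "c3 = (i,l) \<or> c3 = (p,l)"
    using cond3[OF g k(1-3) l(2,3,1)] k(4) by blast
  have "c2 \<noteq> c3" using c2(2) c3'(2) l by auto
  have "{c2,c3} \<subseteq> Em E1 E2 \<inter> ({i,p} \<times> UNIV)" using c2 c3' by auto
  then have "card {c2,c3} \<le> card (Em E1 E2 \<inter> ({i,p} \<times> UNIV))"
    by (rule card_mono[rotated]) (simp add: finEm)
  then show ?thesis using \<open>c2 \<noteq> c3\<close> by simp
qed

lemma edge_split: "g \<in> E2 \<Longrightarrow> \<exists>i j p q. g = ((i,j),(p,q))"
  by (cases g) auto

lemma case2b: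
  assumes z2: "card (Em E1 E2) \<le> 2" and e3: "3 \<le> card E2"
  shows False
proof -
  have "E2 \<noteq> {}" using e3 by auto
  then obtain g0 where "g0 \<in> E2" by blast
  then obtain i0 j0 p0 q0 where g0: "((i0,j0),(p0,q0)) \<in> E2" using edge_split by blast
  have "2 \<le> card (Em E1 E2 \<inter> ({i0,p0} \<times> UNIV))" using lemmaA[OF g0] z2 by simp
  then have "Em E1 E2 \<inter> ({i0,p0} \<times> UNIV) \<noteq> {}" by (intro notI) simp
  then obtain c0 where c0: "c0 \<in> Em E1 E2" by blast
  define r where "r = fst c0"
  have rows: "r = fst (fst g) \<or> r = fst (snd g)" if gin: "g \<in> E2" for g
  proof -
    obtain i j p q where g: "g = ((i,j),(p,q))" using edge_split[OF gin] by blast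
    have A: "2 \<le> card (Em E1 E2 \<inter> ({i,p} \<times> UNIV))" using lemmaA gin z2 g by simp
    have "Em E1 E2 \<inter> ({i,p} \<times> UNIV) = Em E1 E2"
      apply (rule card_seteq[OF finEm])
       apply (rule Int_lower1)
      using A z2 by linarith
    then have "c0 \<in> {i,p} \<times> UNIV" using c0 by blast
    then show ?thesis unfolding r_def g by auto
  qed
  define h where "h g = (if fst (fst g) = r then fst g else snd g)" for g :: edge2
  have h_half: "h g \<in> halves g" for g unfolding h_def halves_def by auto
  have h_row: "fst (h g) = r" if "g \<in> E2" for g using rows[OF that] unfolding h_def by auto
  have inj: "inj_on h E2"
  proof (rule inj_onI)
    fix g g' assume "g \<in> E2" "g' \<in> E2" "h g = h g'"
    show "g = g'"
    proof (rule ccontr)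
      assume "g \<noteq> g'"
      then have "halves g \<inter> halves g' = {}" using halves_disj \<open>g \<in> E2\<close> \<open>g' \<in> E2\<close> by simp
      moreover have "h g \<in> halves g \<inter> halves g'" using h_half[of g] h_half[of g'] \<open>h g = h g'\<close> by simp
      ultimately show False by simp
    qed
  qed
  have img: "h ` E2 \<subseteq> ({r} \<times> {1..3}) - {c0}"
  proof
    fix x assume "x \<in> h ` E2"
    then obtain g where g: "g \<in> E2" "x = h g" by blast
    have "x \<in> HH E2" unfolding HH_def using g h_half by blast
    then have "x \<in> Cells" "x \<noteq> c0" using HH_sub c0 unfolding Em_def by auto
    moreover have "fst x = r" using h_row[OF g(1)] g(2) by simp
    ultimately show "x \<in> ({r} \<times> {1..3}) - {c0}" unfolding Cells_def by (cases x) auto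
  qed
  have "c0 \<in> {r} \<times> {1..3}" using c0 Em_sub unfolding r_def Cells_def by auto
  then have "card (({r} \<times> {1..3::nat}) - {c0}) = 2" by simp
  moreover have "card E2 = card (h ` E2)" using inj by (simp add: card_image)
  moreover have "card (h ` E2) \<le> card (({r} \<times> {1..3::nat}) - {c0})"
    by (rule card_mono[OF _ img]) simp
  ultimately show False using e3 by simp
qed

lemma case2c:
  assumes z3: "card (Em E1 E2) = 3" and e2: "card E2 = 2" and t8: "card E1 = 8"
  shows False
proof -
  obtain g1 g2 where E2eq: "E2 = {g1,g2}" and "g1 \<noteq> g2" using e2 by (metis card_2_iff)
  obtain i1 j1 p1 q1 where g1: "g1 = ((i1,j1),(p1,q1))" by (cases g1) auto
  obtain i2 j2 p2 q2 where g2: "g2 = ((i2,j2),(p2,q2))" by (cases g2) auto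
  have m1: "((i1,j1),(p1,q1)) \<in> E2" and m2: "((i2,j2),(p2,q2)) \<in> E2" using E2eq g1 g2 by auto
  have v1: "i1 \<in> {1..5} \<and> p1 \<in> {1..5} \<and> j1 \<in> {1..3} \<and> q1 \<in> {1..3} \<and> i1 \<noteq> p1 \<and> j1 \<noteq> q1"
    using e2_valid[OF m1] .
  have v2: "i2 \<in> {1..5} \<and> p2 \<in> {1..5} \<and> j2 \<in> {1..3} \<and> q2 \<in> {1..3} \<and> i2 \<noteq> p2 \<and> j2 \<noteq> q2"
    using e2_valid[OF m2] .
  have A1: "2 \<le> card (Em E1 E2 \<inter> ({i1,p1} \<times> UNIV))" using lemmaA[OF m1] z3 by simp
  have A2: "2 \<le> card (Em E1 E2 \<inter> ({i2,p2} \<times> UNIV))" using lemmaA[OF m2] z3 by simp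
  show False
  proof (cases "{i1,p1} \<inter> {i2,p2} = {}")
    case True
    have "card (Em E1 E2 \<inter> ({i1,p1} \<times> UNIV) \<union> Em E1 E2 \<inter> ({i2,p2} \<times> UNIV)) =
          card (Em E1 E2 \<inter> ({i1,p1} \<times> UNIV)) + card (Em E1 E2 \<inter> ({i2,p2} \<times> UNIV))"
      by (rule card_Un_disjoint) (use finEm True in auto)
    moreover have "card (Em E1 E2 \<inter> ({i1,p1} \<times> UNIV) \<union> Em E1 E2 \<inter> ({i2,p2} \<times> UNIV)) \<le> card (Em E1 E2)"
      by (rule card_mono[OF finEm]) auto
    ultimately show False using A1 A2 z3 by simp
  next
    case False
    define U where "U = {i1,p1,i2,p2}"
    have U5: "U \<subseteq> {1..5}" using v1 v2 unfolding U_def by auto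
    have cU: "card U \<le> 3 \<and> 2 \<le> card U"
    proof -
      have "card ({i1,p1} \<union> {i2,p2}) + card ({i1,p1} \<inter> {i2,p2}) = card {i1,p1} + card {i2,p2}"
        using card_Un_Int[of "{i1,p1}" "{i2,p2}"] by simp
      moreover have "card ({i1,p1} \<inter> {i2,p2}) \<ge> 1" using False by (simp add: Suc_le_eq card_gt_0_iff)
      moreover have "card {i1,p1} = 2" "card {i2,p2} = 2" using v1 v2 by auto
      moreover have "card {i1,p1} \<le> card ({i1,p1} \<union> {i2,p2})" by (rule card_mono) auto
      moreover have "{i1,p1} \<union> {i2,p2} = U" unfolding U_def by auto
      then have "card ({i1,p1} \<union> {i2,p2}) = card U" by (rule arg_cong)
      ultimately show ?thesis by linarith
    qed
    define Rin where "Rin = U \<times> {1..3::nat}"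
    have fRin: "finite Rin" unfolding Rin_def U_def by auto
    have cRin: "card Rin = 3 * card U" unfolding Rin_def by (simp add: card_cartesian_product)
    have HRin: "HH E2 \<subseteq> Rin" unfolding HH_def E2eq g1 g2 Rin_def U_def halves_def using v1 v2 by auto
    have EmRin: "Em E1 E2 \<inter> ({i1,p1} \<times> UNIV) \<subseteq> Em E1 E2 \<inter> Rin"
      using Em_sub unfolding Rin_def U_def Cells_def by auto
    have cEm: "2 \<le> card (Em E1 E2 \<inter> Rin)"
      using A1 card_mono[OF _ EmRin] finEm by (meson finite_Int le_trans)
    have fE1: "finite E1" using e1_sub finite_subset unfolding Cells_def by blast
    have "card (E1 \<inter> Rin) + card (HH E2) + card (Em E1 E2 \<inter> Rin) \<le> card Rin"
    proof -
      have fH: "finite (HH E2)" using HRin fRin finite_subset by blast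
      have "card (E1 \<inter> Rin \<union> HH E2) = card (E1 \<inter> Rin) + card (HH E2)"
        by (rule card_Un_disjoint) (use fE1 fH disj_E1_HH in auto)
      moreover have "card (E1 \<inter> Rin \<union> HH E2 \<union> Em E1 E2 \<inter> Rin) = card (E1 \<inter> Rin \<union> HH E2) + card (Em E1 E2 \<inter> Rin)"
        by (rule card_Un_disjoint) (use fE1 fH finEm in \<open>auto simp: Em_def\<close>)
      moreover have "card (E1 \<inter> Rin \<union> HH E2 \<union> Em E1 E2 \<inter> Rin) \<le> card Rin"
        by (rule card_mono[OF fRin]) (use HRin in auto)
      ultimately show ?thesis by simp
    qed
    then have in_le: "card (E1 \<inter> Rin) + 6 \<le> 3 * card U" using card_HH e2 cEm cRin by simp
    have out_sub: "E1 - Rin \<subseteq> ({1..5} - U) \<times> {1..3}"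
      using e1_sub unfolding Cells_def Rin_def by auto
    have out_le: "2 * card (E1 - Rin) \<le> 3 * card ({1..5::nat} - U) + 3"
      using rect_lemma[OF _ out_sub] rf_E1 by auto
    have "card ({1..5::nat} - U) = 5 - card U"
      using U5 by (subst card_Diff_subset) (auto simp: U_def)
    moreover have "card E1 = card (E1 \<inter> Rin) + card (E1 - Rin)"
    proof -
      have "E1 = (E1 \<inter> Rin) \<union> (E1 - Rin)" by blast
      then have "card E1 = card ((E1 \<inter> Rin) \<union> (E1 - Rin))" by simp
      also have "\<dots> = card (E1 \<inter> Rin) + card (E1 - Rin)"
        by (rule card_Un_disjoint) (use fE1 in auto)
      finally show ?thesis .
    qed
    ultimately show False using in_le out_le t8 cU by linarith
  qed
qed

lemma upper: "card E1 + card E2 \<le> 9"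
proof (rule ccontr)
  assume "\<not> ?thesis"
  then have big: "card E1 + card E2 \<ge> 10" by simp
  have c: "card E1 + 2 * card E2 + card (Em E1 E2) = 15" by (rule count)
  have t: "card E1 \<le> 8" by (rule t8)
  show False
  proof (cases "card E2 = 2")
    case True
    then have "card (Em E1 E2) = 3" "card E1 = 8" using big c t by linarith+
    then show False using case2c True by blast
  next
    case False
    then have "card (Em E1 E2) \<le> 2" "3 \<le> card E2" using big c t by linarith+
    then show False using case2b by blast
  qed
qed

end

definition W1 :: "cell set" where "W1 = {(1,2),(1,3),(2,3),(3,1),(3,2),(4,1),(4,3),(5,1)}"
definition W2 :: "edge2 set" where "W2 = {((1,1),(2,2))}"

lemma occW: "occupied W1 W2 c \<longleftrightarrow> c \<in> {(1,1),(2,2),(1,2),(1,3),(2,3),(3,1),(3,2),(4,1),(4,3),(5,1)}"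
  unfolding occupied_def W1_def W2_def halves_def by auto

lemma witness: "z2_config 5 3 W1 W2"
proof -
  have c1: "\<not> (\<exists>i j k l. i \<noteq> k \<and> j \<noteq> l \<and> (i,j) \<in> W1 \<and> (i,l) \<in> W1 \<and> (k,j) \<in> W1 \<and> (k,l) \<in> W1)"
  proof
    assume "\<exists>i j k l. i \<noteq> k \<and> j \<noteq> l \<and> (i,j) \<in> W1 \<and> (i,l) \<in> W1 \<and> (k,j) \<in> W1 \<and> (k,l) \<in> W1"
    then obtain i j k l where h: "i \<noteq> k" "j \<noteq> l" "(i,j) \<in> W1" "(i,l) \<in> W1" "(k,j) \<in> W1" "(k,l) \<in> W1"
      by blast
    have key: "(a,b,d) \<in> {(1,2,3),(3,1,2),(4,1,3)}" if "(a,b) \<in> W1" "(a,d) \<in> W1" "b < d" for a b d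
      using that unfolding W1_def by auto
    show False
    proof (cases "j < l")
      case True
      then show False using key[OF h(3,4)] key[OF h(5,6)] h(1) by auto
    next
      case False
      then have "l < j" using h(2) by simp
      then show False using key[OF h(4,3)] key[OF h(6,5)] h(1) by auto
    qed
  qed
  have c2: "\<not> (\<exists>i j k l. ((i,j),(k,l)) \<in> W2 \<and> occupied W1 W2 (i,l) \<and> occupied W1 W2 (k,j))"
    unfolding occW by (auto simp: W2_def)
  have c3: "\<not> (\<exists>i j p q k l. ((i,j),(p,q)) \<in> W2 \<and>
        distinct [(k,l),(k,j),(k,q),(i,l),(p,l)] \<and>
        (\<forall>c\<in>{(k,l),(k,j),(k,q),(i,l),(p,l)}. occupied W1 W2 c))"
    unfolding occW by (auto simp: W2_def)
  have "\<not> has_gen_C4 W1 W2" unfolding has_gen_C4_def using c1 c2 c3 by blast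
  moreover have "\<forall>c\<in>W1. valid_cell 5 3 c" unfolding W1_def valid_cell_def by auto
  moreover have "\<forall>e\<in>W2. valid_edge2 5 3 e" unfolding W2_def valid_edge2_def valid_cell_def by auto
  moreover have "simple_config W1 W2" unfolding simple_config_def W1_def W2_def halves_def by auto
  ultimately show ?thesis unfolding z2_config_def by blast
qed

theorem theorem4p3:
  shows "z2 5 3 = 9"
proof -
  let ?S = "{card E1 + card E2 | E1 E2. z2_config 5 3 E1 E2}"
  have ub: "\<forall>y\<in>?S. y \<le> 9" using upper by blast
  have "card W1 = 8" unfolding W1_def by simp
  moreover have "card W2 = 1" unfolding W2_def by simp
  ultimately have mem: "9 \<in> ?S" using witness by force
  have fin: "finite ?S" by (rule finite_subset[of _ "{..9}"]) (use ub in auto)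
  show ?thesis unfolding z2_def by (rule Max_eqI[OF fin]) (use ub mem in auto)
qed

end
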